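(* Let $N\ge 1$ be an integer, $\mu=e^{2\pi i/N}$, and let $(s_1,i_1),\dots,(s_n,i_n)$ be pairs with $s_j$ positive integers and $i_j\in\mathbb{Z}$ ($n\ge 1$). For a positive integer $M$ put, with $i_0:=0$, $$H_M=\sum_{M\ge m_1>m_2>\cdots>m_n\ge 1}\ \prod_{j=1}^n \frac{\mu^{(i_j-i_{j-1})m_j}}{m_j^{s_j}}.$$ Then there exist finitely many positive integers $t_1,\dots,t_r$, complex numbers $a_1,\dots,a_r$, and a number $c\in\mathsf{CMZV}^N_{s_1+\cdots+s_n}$ such that $$H_M=\sum_{j=1}^r a_j(\log M+\gamma)^{t_j}+c+o(1)\qquad (M\to\infty),$$ where $\gamma$ is the Euler–Mascheroni constant.
   Context: For positive integers $s_1,\dots,s_k$ and complex $a_1,\dots,a_k$ define $L_{s_1,\dots,s_k}(a_1,\dots,a_k)=\sum_{n_1>\cdots>n_k\ge1}\frac{a_1^{n_1}\cdots a_k^{n_k}}{n_1^{s_1}\cdots n_k^{s_k}}$. For integers $N\ge1$ and $w\ge1$, $\mathsf{CMZV}^N_w$ denotes the $\mathbb{Q}$-linear span of all values $L_{s_1,\dots,s_k}(a_1,\dots,a_k)$ with $k\ge1$, $s_j$ positive integers with $s_1+\cdots+s_k=w$, each $a_j$ an $N$-th root of unity, and $(s_1,a_1)\neq(1,1)$ (so that the series converges). These are the colored multiple zeta values of weight $w$ and level $N$. *)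

theory Defs
  imports "HOL-Analysis.Analysis"
begin

text \<open>Truncated multiple polylogarithm sum: for a list [(s_1,a_1),...,(s_k,a_k)],
  trunc_L xs M = sum over M >= n_1 > ... > n_k >= 1 of prod a_j^n_j / n_j^s_j.\<close>
fun trunc_L :: "(nat \<times> complex) list \<Rightarrow> nat \<Rightarrow> complex" where
  "trunc_L [] M = 1"
| "trunc_L ((s, a) # xs) M =
     (\<Sum>m\<in>{1..M}. a ^ m / of_nat m ^ s * trunc_L xs (m - 1))"

definition L_val :: "(nat \<times> complex) list \<Rightarrow> complex" where
  "L_val xs = lim (\<lambda>M. trunc_L xs M)"

definition cmzv_index :: "nat \<Rightarrow> nat \<Rightarrow> (nat \<times> complex) list \<Rightarrow> bool" where
  "cmzv_index N w xs \<longleftrightarrow> xs \<noteq> [] \<and> (\<forall>(s, a)\<in>set xs. s \<ge> 1 \<and> a ^ N = 1)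
     \<and> sum_list (map fst xs) = w \<and> hd xs \<noteq> (1, 1)"

definition CMZV :: "nat \<Rightarrow> nat \<Rightarrow> complex set" where
  "CMZV N w = {c. \<exists>S q. finite S \<and> (\<forall>xs\<in>S. cmzv_index N w xs) \<and>
                       c = (\<Sum>xs\<in>S. of_rat (q xs) * L_val xs)}"

fun color_diffs :: "complex \<Rightarrow> int \<Rightarrow> (nat \<times> int) list \<Rightarrow> (nat \<times> complex) list" where
  "color_diffs \<mu> p [] = []"
| "color_diffs \<mu> p ((s, i) # r) = (s, \<mu> powi (i - p)) # color_diffs \<mu> i r"

end

theory Submission
  imports Defs "HOL-Real_Asymp.Real_Asymp"
begin

lemma T_Cons_0 [simp]: "trunc_L (x # v) 0 = 0"
  by (cases x) simp

lemma T_Cons_Suc: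
  "trunc_L ((s, a) # v) (Suc M) = trunc_L ((s, a) # v) M + a ^ Suc M / of_nat (Suc M) ^ s * trunc_L v M"
  by (simp only: trunc_L.simps sum.cl_ivl_Suc) simp

definition valid :: "nat \<Rightarrow> (nat \<times> complex) list \<Rightarrow> bool" where
  "valid N w \<longleftrightarrow> (\<forall>(s, a)\<in>set w. s \<ge> 1 \<and> a ^ N = 1)"

lemma valid_Nil [simp]: "valid N []" by (simp add: valid_def)
lemma valid_Cons [simp]: "valid N ((s,a) # v) \<longleftrightarrow> s \<ge> 1 \<and> a ^ N = 1 \<and> valid N v"
  by (auto simp: valid_def)

lemma root_norm: assumes "N \<ge> 1" "(a::complex) ^ N = 1" shows "norm a = 1"
proof -
  have "norm a ^ N = 1" using assms by (metis norm_one norm_power)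
  thus ?thesis using assms(1) power_eq_iff_eq_base[of N "norm a" 1] by simp
qed

lemma coef_norm_le:
  assumes "N \<ge> 1" "(a::complex) ^ N = 1" "s \<ge> 1" "m \<ge> 1"
  shows "norm (a ^ m / of_nat m ^ s) \<le> 1 / real m"
proof -
  have "norm (a ^ m / of_nat m ^ s) = 1 / real m ^ s"
    using root_norm[OF assms(1,2)] by (simp add: norm_divide norm_power)
  also have "\<dots> \<le> 1 / real m"
  proof -
    have "real m \<le> real m ^ s" using assms(3,4)
      by (metis One_nat_def of_nat_1 of_nat_le_iff power_increasing power_one_right) 
    thus ?thesis using assms(4) by (intro divide_left_mono) auto
  qed
  finally show ?thesis .
qed

lemma harm_real_def: "(harm M :: real) = (\<Sum>m\<in>{1..M}. 1 / real m)"
  by (simp add: harm_def inverse_eq_divide)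

lemma T_bound:
  assumes "N \<ge> 1" "valid N w"
  shows "norm (trunc_L w M) \<le> (harm M :: real) ^ length w"
  using assms(2)
proof (induction w arbitrary: M)
  case Nil thus ?case by simp
next
  case (Cons x v)
  obtain s a where x: "x = (s, a)" by (cases x)
  have s: "s \<ge> 1" "a ^ N = 1" "valid N v" using Cons.prems x by auto
  have "norm (trunc_L (x # v) M) \<le> (\<Sum>m\<in>{1..M}. norm (a ^ m / of_nat m ^ s * trunc_L v (m - 1)))"
    unfolding x by (simp add: norm_sum)
  also have "\<dots> \<le> (\<Sum>m\<in>{1..M}. 1 / real m * harm M ^ length v)"
  proof (rule sum_mono)
    fix m assume m: "m \<in> {1..M}"
    have "norm (a ^ m / of_nat m ^ s * trunc_L v (m - 1)) = norm (a ^ m / of_nat m ^ s) * norm (trunc_L v (m - 1))"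
      by (rule norm_mult)
    also have "\<dots> \<le> 1 / real m * harm M ^ length v"
    proof (rule mult_mono)
      show "norm (a ^ m / of_nat m ^ s) \<le> 1 / real m" using coef_norm_le[OF assms(1) s(2,1)] m by auto
      have "norm (trunc_L v (m - 1)) \<le> harm (m - 1) ^ length v" using Cons.IH s(3) by blast
      also have "\<dots> \<le> harm M ^ length v" using m by (intro power_mono harm_mono harm_nonneg) auto
      finally show "norm (trunc_L v (m - 1)) \<le> harm M ^ length v" .
    qed auto
    finally show "norm (a ^ m / of_nat m ^ s * trunc_L v (m - 1)) \<le> 1 / real m * harm M ^ length v" .
  qed
  also have "\<dots> = harm M ^ length (x # v)"
    by (simp only: sum_distrib_right[symmetric] harm_real_def[symmetric] length_Cons power_Suc)
  finally show ?case .
qed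

lemma T_diff:
  assumes "N \<ge> 1" "valid N v"
  shows "norm (trunc_L v (Suc n) - trunc_L v n) \<le> (1 + harm n :: real) ^ length v / (real n + 1)"
proof (cases v)
  case Nil thus ?thesis by simp
next
  case (Cons x v')
  obtain s a where x: "x = (s, a)" by (cases x)
  have s: "s \<ge> 1" "a ^ N = 1" "valid N v'" using assms Cons x by auto
  have "norm (trunc_L v (Suc n) - trunc_L v n) = norm (a ^ Suc n / of_nat (Suc n) ^ s) * norm (trunc_L v' n)"
    unfolding Cons x T_Cons_Suc by (simp only: add_diff_cancel_left' norm_mult)
  also have "\<dots> \<le> 1 / real (Suc n) * harm n ^ length v'"
    by (intro mult_mono coef_norm_le[OF assms(1) s(2,1)] T_bound[OF assms(1) s(3)]) auto
  also have "\<dots> \<le> 1 / real (Suc n) * (1 + harm n) ^ length v"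
  proof -
    have h0: "(0::real) \<le> harm n" by (rule harm_nonneg)
    have "(harm n :: real) ^ length v' \<le> (1 + harm n) ^ length v'" by (rule power_mono) (use h0 in auto)
    also have "\<dots> \<le> (1 + harm n) * (1 + harm n) ^ length v'" using h0 mult_right_mono[of 1 "1 + harm n" "(1 + harm n) ^ length v'"] by simp
    finally show ?thesis unfolding Cons by (intro mult_left_mono) auto
  qed
  finally show ?thesis by (simp add: add.commute)
qed


lemma growth_general:
  assumes "\<delta> > 0"
  shows "\<exists>K>0. \<forall>y::real. y \<ge> 1 \<longrightarrow> (2 + ln y) ^ q \<le> K * y powr \<delta>"
proof (cases "q = 0")
  case True thus ?thesis by (intro exI[of _ 1]) (auto intro: ge_one_powr_ge_zero simp: less_imp_le[OF assms])
next
  case False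
  define e where "e = \<delta> / q"
  have e: "e > 0" using assms False by (simp add: e_def)
  show ?thesis
  proof (intro exI[of _ "(2 + 1/e) ^ q"] conjI allI impI)
    show "(2 + 1/e) ^ q > 0" using e by (intro zero_less_power add_pos_pos) auto
    fix y :: real assume y: "y \<ge> 1"
    have ye: "y powr e \<ge> 1" using y e by (intro ge_one_powr_ge_zero) auto
    have "e * ln y = ln (y powr e)" using y by (simp add: ln_powr)
    also have "\<dots> \<le> y powr e - 1" using ye by (intro ln_le_minus_one) auto
    finally have "ln y \<le> y powr e / e" using e by (simp add: field_simps)
    hence "2 + ln y \<le> 2 * y powr e + y powr e / e" using ye by linarith
    also have "\<dots> = (2 + 1/e) * y powr e" by (simp add: algebra_simps)
    finally have "2 + ln y \<le> (2 + 1/e) * y powr e" .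
    moreover have "0 \<le> 2 + ln y" using y by simp
    ultimately have "(2 + ln y) ^ q \<le> ((2 + 1/e) * y powr e) ^ q" by (simp add: power_mono)
    also have "\<dots> = (2 + 1/e) ^ q * y powr (of_nat q * e)" using y by (simp add: power_mult_distrib powr_power)
    also have "of_nat q * e = \<delta>" using False by (simp add: e_def)
    finally show "(2 + ln y) ^ q \<le> (2 + 1 / e) ^ q * y powr \<delta>" .
  qed
qed

lemma harm_le_ln: "(harm m :: real) \<le> 1 + ln (real m + 1)"
proof (cases "m = 0")
  case True thus ?thesis by (simp add: harm_def)
next
  case False
  have "harm m - ln (real m) \<le> harm 1 - ln (real 1)"
    using euler_mascheroni_sequence_decreasing[of 1 m] False by simp
  hence "harm m \<le> 1 + ln (real m)" by (simp add: harm_def)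
  also have "ln (real m) \<le> ln (real m + 1)" using False by simp
  finally show ?thesis by simp
qed

lemma growth_harm: "\<exists>K>0. \<forall>m. (1 + harm m :: real) ^ k \<le> K * sqrt (real m + 1)"
proof -
  obtain K where K: "K > 0" "\<And>y::real. y \<ge> 1 \<Longrightarrow> (2 + ln y) ^ k \<le> K * y powr (1/2)"
    using growth_general[of "1/2" k] by auto
  show ?thesis
  proof (intro exI[of _ K] conjI allI)
    fix m
    have "(1 + harm m :: real) ^ k \<le> (2 + ln (real m + 1)) ^ k"
      using harm_le_ln[of m] by (intro power_mono) (auto simp: harm_nonneg add_nonneg_nonneg)
    also have "\<dots> \<le> K * (real m + 1) powr (1/2)" by (rule K(2)) simp
    also have "(real m + 1) powr (1/2) = sqrt (real m + 1)" by (simp add: powr_half_sqrt)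
    finally show "(1 + harm m :: real) ^ k \<le> K * sqrt (real m + 1)" .
  qed (use K in auto)
qed

lemma growth_ln: "\<exists>K>0. \<forall>M::nat. (1 + \<bar>ln (real M)\<bar>) ^ q \<le> K * (real M + 1) powr (1/4)"
proof -
  obtain K where K: "K > 0" "\<And>y::real. y \<ge> 1 \<Longrightarrow> (2 + ln y) ^ q \<le> K * y powr (1/4)"
    using growth_general[of "1/4" q] by auto
  show ?thesis
  proof (intro exI[of _ K] conjI allI)
    fix M :: nat
    have "\<bar>ln (real M)\<bar> \<le> ln (real M + 1)"
      by (cases "M = 0") auto
    hence "(1 + \<bar>ln (real M)\<bar>) ^ q \<le> (2 + ln (real M + 1)) ^ q"
      by (intro power_mono) auto
    also have "\<dots> \<le> K * (real M + 1) powr (1/4)" by (rule K(2)) simp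
    finally show "(1 + \<bar>ln (real M)\<bar>) ^ q \<le> K * (real M + 1) powr (1/4)" .
  qed (use K in auto)
qed

definition negl :: "(nat \<Rightarrow> complex) \<Rightarrow> bool" where
  "negl e \<longleftrightarrow> (\<forall>q. (\<lambda>M. (1 + \<bar>ln (real M)\<bar>) ^ q * norm (e M)) \<longlonglongrightarrow> 0)"

lemma negl_from_bound:
  assumes "eventually (\<lambda>M. norm (e M) \<le> C / sqrt (real M + 1)) sequentially"
  shows "negl e"
  unfolding negl_def
proof
  fix q
  obtain K where K: "K > 0" "\<And>M::nat. (1 + \<bar>ln (real M)\<bar>) ^ q \<le> K * (real M + 1) powr (1/4)"
    using growth_ln[of q] by auto
  show "(\<lambda>M. (1 + \<bar>ln (real M)\<bar>) ^ q * norm (e M)) \<longlonglongrightarrow> 0"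
  proof (rule Lim_null_comparison)
    show "eventually (\<lambda>M. norm ((1 + \<bar>ln (real M)\<bar>) ^ q * norm (e M)) \<le> K * C * (real M + 1) powr (-1/4)) sequentially"
      using assms
    proof eventually_elim
      case (elim M)
      have p: "(real M + 1) powr (1/4) / sqrt (real M + 1) = (real M + 1) powr (-1/4)"
      proof -
        have "sqrt (real M + 1) = (real M + 1) powr (1/2)" by (simp add: powr_half_sqrt)
        moreover have "(real M + 1) powr (1/4) / (real M + 1) powr (1/2) = (real M + 1) powr (1/4 - 1/2)"
          by (rule powr_diff[symmetric])
        moreover have "(1/4 - 1/2 :: real) = -1/4" by simp
        ultimately show ?thesis by simp
      qed
      have "norm ((1 + \<bar>ln (real M)\<bar>) ^ q * norm (e M)) = (1 + \<bar>ln (real M)\<bar>) ^ q * norm (e M)"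
        by simp
      also have "\<dots> \<le> K * (real M + 1) powr (1/4) * (C / sqrt (real M + 1))"
        using K(1) by (intro mult_mono K(2) elim) auto
      also have "\<dots> = K * C * ((real M + 1) powr (1/4) / sqrt (real M + 1))" by simp
      also have "\<dots> = K * C * (real M + 1) powr (-1/4)" by (simp only: p)
      finally show ?case .
    qed
    have "(\<lambda>M::nat. (real M + 1) powr (-1/4)) \<longlonglongrightarrow> 0" by real_asymp
    thus "(\<lambda>M::nat. K * C * (real M + 1) powr (-1/4)) \<longlonglongrightarrow> 0"
      by (intro tendsto_mult_right_zero)
  qed
qed

lemma negl_tendsto: "negl e \<Longrightarrow> e \<longlonglongrightarrow> 0"
  unfolding negl_def by (drule spec[of _ 0]) (simp add: tendsto_norm_zero_iff)

lemma negl_mult_bounded: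
  assumes "negl e" "\<And>M. norm (f M) \<le> C * (1 + \<bar>ln (real M)\<bar>) ^ p"
  shows "negl (\<lambda>M. f M * e M)"
  unfolding negl_def
proof
  fix q
  have t: "(\<lambda>M. (1 + \<bar>ln (real M)\<bar>) ^ (q + p) * norm (e M)) \<longlonglongrightarrow> 0"
    using assms(1) unfolding negl_def by blast
  show "(\<lambda>M. (1 + \<bar>ln (real M)\<bar>) ^ q * norm (f M * e M)) \<longlonglongrightarrow> 0"
  proof (rule Lim_null_comparison)
    show "eventually (\<lambda>M. norm ((1 + \<bar>ln (real M)\<bar>) ^ q * norm (f M * e M)) \<le> C * ((1 + \<bar>ln (real M)\<bar>) ^ (q + p) * norm (e M))) sequentially"
    proof (intro always_eventually allI)
      fix M
      have "norm ((1 + \<bar>ln (real M)\<bar>) ^ q * norm (f M * e M)) = (1 + \<bar>ln (real M)\<bar>) ^ q * (norm (f M) * norm (e M))"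
        by (simp add: norm_mult)
      also have "\<dots> \<le> (1 + \<bar>ln (real M)\<bar>) ^ q * ((C * (1 + \<bar>ln (real M)\<bar>) ^ p) * norm (e M))"
        by (intro mult_left_mono mult_right_mono assms(2)) auto
      also have "\<dots> = C * ((1 + \<bar>ln (real M)\<bar>) ^ (q + p) * norm (e M))"
        by (simp add: power_add)
      finally show "norm ((1 + \<bar>ln (real M)\<bar>) ^ q * norm (f M * e M)) \<le> C * ((1 + \<bar>ln (real M)\<bar>) ^ (q + p) * norm (e M))" .
    qed
    show "(\<lambda>M. C * ((1 + \<bar>ln (real M)\<bar>) ^ (q + p) * norm (e M))) \<longlonglongrightarrow> 0"
      using t by (rule tendsto_mult_right_zero)
  qed
qed

lemma negl_add: "negl e1 \<Longrightarrow> negl e2 \<Longrightarrow> negl (\<lambda>M. e1 M + e2 M)"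
  unfolding negl_def
proof
  fix q assume a: "\<forall>q. (\<lambda>M. (1 + \<bar>ln (real M)\<bar>) ^ q * norm (e1 M)) \<longlonglongrightarrow> 0"
     "\<forall>q. (\<lambda>M. (1 + \<bar>ln (real M)\<bar>) ^ q * norm (e2 M)) \<longlonglongrightarrow> 0"
  show "(\<lambda>M. (1 + \<bar>ln (real M)\<bar>) ^ q * norm (e1 M + e2 M)) \<longlonglongrightarrow> 0"
  proof (rule Lim_null_comparison)
    show "eventually (\<lambda>M. norm ((1 + \<bar>ln (real M)\<bar>) ^ q * norm (e1 M + e2 M)) \<le> (1 + \<bar>ln (real M)\<bar>) ^ q * norm (e1 M) + (1 + \<bar>ln (real M)\<bar>) ^ q * norm (e2 M)) sequentially"
      by (intro always_eventually allI) (simp add: distrib_left[symmetric] mult_left_mono norm_triangle_ineq)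
    show "(\<lambda>M. (1 + \<bar>ln (real M)\<bar>) ^ q * norm (e1 M) + (1 + \<bar>ln (real M)\<bar>) ^ q * norm (e2 M)) \<longlonglongrightarrow> 0"
      using tendsto_add[OF a(1)[rule_format, of q] a(2)[rule_format, of q]] by simp
  qed
qed

lemma negl_cmult: "negl e \<Longrightarrow> negl (\<lambda>M. c * e M)"
  using negl_mult_bounded[of e "\<lambda>_. c" "norm c" 0] by simp

lemma negl_cong: "negl e \<Longrightarrow> (\<And>M. e M = e' M) \<Longrightarrow> negl e'"
proof -
  assume "negl e" "\<And>M. e M = e' M"
  hence "e = e'" by auto
  thus ?thesis using \<open>negl e\<close> by simp
qed

lemma negl_mult_negl:
  assumes "negl e1" "negl e2" shows "negl (\<lambda>M. e1 M * e2 M)"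
proof -
  have "convergent e1" using negl_tendsto[OF assms(1)] by (auto simp: convergent_def)
  hence "Bseq e1" by (rule convergent_imp_Bseq)
  then obtain B where "\<And>M. norm (e1 M) \<le> B" by (auto simp: Bseq_def)
  thus ?thesis by (intro negl_mult_bounded[OF assms(2), of _ B 0]) auto
qed


definition gg :: "nat \<Rightarrow> real" where "gg M = 1 / sqrt (real M + 1)"

lemma gg_tendsto: "gg \<longlonglongrightarrow> 0"
  unfolding gg_def by real_asymp

lemma gg_pos: "gg M > 0" by (simp add: gg_def)

lemma conv_rate:
  fixes f R d :: "nat \<Rightarrow> complex"
  assumes f: "\<And>M. f M = R M + (\<Sum>m\<in>{1..M}. d m)"
    and R: "\<And>M. norm (R M) \<le> C * gg M"
    and d: "\<And>m. m \<ge> 1 \<Longrightarrow> norm (d m) \<le> C * (gg (m - 1) - gg m)"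
  shows "f \<longlonglongrightarrow> lim f" "\<And>M. norm (f M - lim f) \<le> 2 * C * gg M"
proof -
  have C: "C \<ge> 0"
  proof -
    have "0 \<le> C * gg 0" using R[of 0] norm_ge_zero order_trans by blast
    thus ?thesis using gg_pos[of 0] by (simp add: zero_le_mult_iff)
  qed
  define S where "S M = (\<Sum>m\<in>{1..M}. d m)" for M
  have S_Suc: "S (Suc n) = S n + d (Suc n)" for n
    unfolding S_def by (simp add: sum.cl_ivl_Suc)
  have claim1: "norm (S M' - S M) \<le> C * (gg M - gg M')" if "M \<le> M'" for M M'
    using that
  proof (induction M' rule: dec_induct)
    case base thus ?case by simp
  next
    case (step n)
    have eq: "S (Suc n) - S M = (S n - S M) + d (Suc n)" by (simp add: S_Suc)
    have "norm (S (Suc n) - S M) \<le> norm (S n - S M) + norm (d (Suc n))"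
      unfolding eq by (rule norm_triangle_ineq)
    also have "\<dots> \<le> C * (gg M - gg n) + C * (gg n - gg (Suc n))"
      using step.IH d[of "Suc n"] by simp
    finally show ?case by (simp add: algebra_simps)
  qed
  have claim2: "norm (f M' - f M) \<le> 2 * C * gg M" if "M \<le> M'" for M M'
  proof -
    have eq: "f M' - f M = (R M' - R M) + (S M' - S M)" unfolding f S_def by simp
    have "norm (f M' - f M) \<le> norm (R M' - R M) + norm (S M' - S M)"
      unfolding eq by (rule norm_triangle_ineq)
    moreover have "norm (R M' - R M) \<le> norm (R M') + norm (R M)" by (rule norm_triangle_ineq4)
    ultimately have "norm (f M' - f M) \<le> norm (R M') + norm (R M) + norm (S M' - S M)" by linarith
    also have "\<dots> \<le> C * gg M' + C * gg M + C * (gg M - gg M')"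
      using R[of M'] R[of M] claim1[OF that] by linarith
    finally show ?thesis by (simp add: algebra_simps)
  qed
  have "Cauchy f"
  proof (rule CauchyI)
    fix e :: real assume e: "e > 0"
    have "(\<lambda>M. 4 * C * gg M) \<longlonglongrightarrow> 0" by (intro tendsto_mult_right_zero gg_tendsto)
    from order_tendstoD(2)[OF this e] obtain M0 where M0: "\<And>n. n \<ge> M0 \<Longrightarrow> 4 * C * gg n < e"
      by (auto simp: eventually_sequentially)
    show "\<exists>M. \<forall>m\<ge>M. \<forall>n\<ge>M. norm (f m - f n) < e"
    proof (intro exI[of _ M0] allI impI)
      fix m n assume mn: "m \<ge> M0" "n \<ge> M0"
      have eq: "f m - f n = (f m - f M0) - (f n - f M0)" by simp
      have "norm (f m - f n) \<le> norm (f m - f M0) + norm (f n - f M0)"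
        unfolding eq by (rule norm_triangle_ineq4)
      also have "\<dots> \<le> 2 * C * gg M0 + 2 * C * gg M0" using claim2 mn by (intro add_mono) auto
      also have "\<dots> < e" using M0[of M0] by simp
      finally show "norm (f m - f n) < e" .
    qed
  qed
  hence conv: "convergent f" by (rule Cauchy_convergent)
  thus lim: "f \<longlonglongrightarrow> lim f" by (simp add: convergent_LIMSEQ_iff)
  fix M
  have "(\<lambda>M'. norm (f M' - f M)) \<longlonglongrightarrow> norm (lim f - f M)"
    by (intro tendsto_intros lim)
  moreover have "eventually (\<lambda>M'. norm (f M' - f M) \<le> 2 * C * gg M) sequentially"
    using claim2 by (auto simp: eventually_sequentially)
  ultimately have "norm (lim f - f M) \<le> 2 * C * gg M"
    by (rule tendsto_upperbound) simp
  thus "norm (f M - lim f) \<le> 2 * C * gg M" by (simp add: norm_minus_commute)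
qed

lemma gg_diff_bound:
  assumes "m \<ge> 1" "X \<le> K * sqrt (real m + 1)" "K \<ge> 0"
  shows "X / (real m + 1) ^ 2 \<le> 2 * K * (gg (m - 1) - gg m)"
proof -
  define a where "a = sqrt (real m)"
  define b where "b = sqrt (real m + 1)"
  have a: "a > 0" "a \<le> b" "a ^ 2 = real m" using assms(1) by (auto simp: a_def b_def)
  have b: "b > 0" "b ^ 2 = real m + 1" by (auto simp: b_def)
  have gm1: "gg (m - 1) = 1 / a" using assms(1) by (simp add: gg_def a_def of_nat_diff)
  have gm: "gg m = 1 / b" by (simp add: gg_def b_def)
  have ba: "(b - a) * (b + a) = 1" using a(3) b(2) by (simp add: algebra_simps power2_eq_square)
  have "1 / a - 1 / b = (b - a) / (a * b)" using a b by (simp add: field_simps)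
  also have "b - a = 1 / (b + a)" using ba a b by (simp add: eq_divide_eq)
  hence "(b - a) / (a * b) = 1 / (a * b * (a + b))" by (simp add: add.commute mult_ac)
  also have "\<dots> \<ge> 1 / (b * b * (2 * b))" using a b
    by (intro divide_left_mono mult_mono mult_pos_pos) auto
  finally have key: "1 / (2 * b ^ 3) \<le> gg (m - 1) - gg m" unfolding gm1 gm
    by (simp add: power3_eq_cube mult_ac)
  have "X / (real m + 1) ^ 2 \<le> K * b / (real m + 1) ^ 2"
    using assms(2) by (intro divide_right_mono) (auto simp: b_def)
  also have "\<dots> = K * b / (b ^ 2) ^ 2" using b(2) by simp
  also have "\<dots> = 2 * K * (1 / (2 * b ^ 3))" using b(1) by (simp add: field_simps power2_eq_square power3_eq_cube)
  also have "\<dots> \<le> 2 * K * (gg (m - 1) - gg m)" using key assms(3) by (intro mult_left_mono) auto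
  finally show ?thesis .
qed


lemma harm_pow_mono: "m \<le> n \<Longrightarrow> (harm m :: real) ^ k \<le> (1 + harm n) ^ k"
  by (intro power_mono) (auto intro: order_trans[OF harm_mono] harm_nonneg)

lemma harm_pow_mono': "m \<le> n \<Longrightarrow> (1 + harm m :: real) ^ k \<le> (1 + harm n) ^ k"
  by (intro power_mono) (auto intro: harm_mono harm_nonneg add_nonneg_nonneg)

lemma adm_conv_gen:
  fixes f :: "nat \<Rightarrow> complex"
  assumes "\<And>M. f M = R M + (\<Sum>m\<in>{1..M}. d m)"
    and "\<And>M. norm (R M) \<le> C * gg M"
    and "\<And>m. m \<ge> 1 \<Longrightarrow> norm (d m) \<le> C * (gg (m - 1) - gg m)"
  shows "negl (\<lambda>M. f M - lim f)"
proof (rule negl_from_bound[of _ "2 * C"])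
  show "eventually (\<lambda>M. norm (f M - lim f) \<le> 2 * C / sqrt (real M + 1)) sequentially"
    using conv_rate(2)[OF assms] by (intro always_eventually allI) (simp add: gg_def)
qed

lemma frac_cross: "0 < (P::real) \<Longrightarrow> 0 < Q \<Longrightarrow> a * Q \<le> b * P \<Longrightarrow> a / P \<le> b / Q"
  by (simp add: field_simps)

lemma frac_split: "(A::complex) / x - B / y = (A - B) / x + B * (1 / x - 1 / y)"
  by (simp add: diff_divide_distrib algebra_simps)

lemma b_diff_bound:
  assumes N: "N \<ge> 1" and v: "valid N v" and m: "m \<ge> 1"
  defines "b \<equiv> (\<lambda>m. trunc_L v (m - 1) / of_nat m)"
  shows "norm (b m - b (m - 1)) \<le> 12 * (1 + harm m :: real) ^ length v / (real m + 1) ^ 2"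
proof (cases "m = 1")
  case True
  have "norm (b m - b (m - 1)) = norm (trunc_L v 0)" using True by (simp add: b_def)
  also have "\<dots> \<le> harm 0 ^ length v" by (rule T_bound[OF N v])
  also have "\<dots> \<le> 1" by (cases "length v") (auto simp: harm_def)
  also have "1 \<le> 12 * (1 + harm m :: real) ^ length v / (real m + 1) ^ 2"
  proof -
    have "(1::real) \<le> (1 + harm m) ^ length v" by (intro one_le_power) (auto simp: harm_nonneg)
    thus ?thesis using True by simp
  qed
  finally show ?thesis .
next
  case False
  define n where "n = m - 2"
  have n: "m = n + 2" using m False by (simp add: n_def)
  define Y where "Y = (1 + harm m :: real) ^ length v"
  have Y0: "Y \<ge> 0" by (simp add: Y_def harm_nonneg add_nonneg_nonneg)
  have eq: "b m - b (m - 1) = (trunc_L v (Suc n) - trunc_L v n) / of_nat (n + 2)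
            + trunc_L v n * (1 / of_nat (n + 2) - 1 / of_nat (n + 1))"
  proof -
    have "b m - b (m - 1) = trunc_L v (Suc n) / of_nat (n + 2) - trunc_L v n / of_nat (n + 1)"
      by (simp add: b_def n)
    also have "\<dots> = (trunc_L v (Suc n) - trunc_L v n) / of_nat (n + 2)
            + trunc_L v n * (1 / of_nat (n + 2) - 1 / of_nat (n + 1))"
      by (rule frac_split)
    finally show ?thesis .
  qed
  have d1: "norm ((trunc_L v (Suc n) - trunc_L v n) / of_nat (n + 2)) \<le> Y / ((real n + 1) * (real n + 2))"
  proof -
    have "norm ((trunc_L v (Suc n) - trunc_L v n) / of_nat (n + 2)) = norm (trunc_L v (Suc n) - trunc_L v n) / (real n + 2)"
      unfolding norm_divide norm_of_nat by simp
    also have "\<dots> \<le> ((1 + harm n) ^ length v / (real n + 1)) / (real n + 2)"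
      by (intro divide_right_mono T_diff[OF N v]) auto
    also have "\<dots> \<le> (Y / (real n + 1)) / (real n + 2)"
      unfolding Y_def n by (intro divide_right_mono harm_pow_mono') auto
    finally show ?thesis by simp
  qed
  have d2: "norm (trunc_L v n * (1 / of_nat (n + 2) - 1 / of_nat (n + 1))) \<le> Y / ((real n + 1) * (real n + 2))"
  proof -
    have c: "(1 / of_nat (n + 2) - 1 / of_nat (n + 1) :: complex) = of_real (1 / real (n + 2) - 1 / real (n + 1))"
      by simp
    have r: "\<bar>1 / real (n + 2) - 1 / real (n + 1)\<bar> = 1 / ((real n + 1) * (real n + 2))"
      by (simp add: field_simps)
    have "norm (trunc_L v n * (1 / of_nat (n + 2) - 1 / of_nat (n + 1))) = norm (trunc_L v n) * (1 / ((real n + 1) * (real n + 2)))"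
      unfolding norm_mult c norm_of_real r ..
    also have "\<dots> = norm (trunc_L v n) / ((real n + 1) * (real n + 2))" by simp
    also have "\<dots> \<le> Y / ((real n + 1) * (real n + 2))"
      unfolding Y_def n by (intro divide_right_mono order.trans[OF T_bound[OF N v]] harm_pow_mono) auto
    finally show ?thesis .
  qed
  have "norm (b m - b (m - 1)) \<le> 2 * Y / ((real n + 1) * (real n + 2))"
    unfolding eq using norm_triangle_le[OF add_mono[OF d1 d2]] by simp
  also have "\<dots> \<le> 12 * Y / (real m + 1) ^ 2"
  proof -
    have nn: "0 \<le> real n * real n" by simp
    have "2 / ((real n + 1) * (real n + 2)) \<le> 12 / (real n + 3) ^ 2"
    proof (rule frac_cross)
      show "0 < (real n + 1) * (real n + 2)" "0 < (real n + 3) ^ 2" by auto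
      show "2 * (real n + 3) ^ 2 \<le> 12 * ((real n + 1) * (real n + 2))"
        using nn by (simp add: algebra_simps power2_eq_square)
    qed
    hence "Y * (2 / ((real n + 1) * (real n + 2))) \<le> Y * (12 / (real n + 3) ^ 2)"
      using Y0 by (rule mult_left_mono)
    moreover have "real m + 1 = real n + 3" using n by simp
    ultimately show ?thesis by (simp add: mult.commute add.commute)
  qed
  finally show ?thesis unfolding Y_def .
qed

lemma adm_conv:
  assumes N: "N \<ge> 1" and w: "valid N ((s, a) # v)" and ne: "(s, a) \<noteq> (1, 1)"
  shows "negl (\<lambda>M. trunc_L ((s, a) # v) M - L_val ((s, a) # v))"
proof -
  have s: "s \<ge> 1" and a: "a ^ N = 1" and v: "valid N v" using w by auto
  have na: "norm a = 1" by (rule root_norm[OF N a])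
  obtain K where K: "K > 0" "\<And>m. (1 + harm m :: real) ^ length v \<le> K * sqrt (real m + 1)"
    using growth_harm[of "length v"] by auto
  define f where "f = (\<lambda>M. trunc_L ((s, a) # v) M)"
  have Lf: "L_val ((s, a) # v) = lim f" by (simp add: L_val_def f_def)
  have "negl (\<lambda>M. f M - lim f)"
  proof (cases "s \<ge> 2")
    case True
    define d where "d = (\<lambda>m. a ^ m / of_nat m ^ s * trunc_L v (m - 1))"
    show ?thesis
    proof (rule adm_conv_gen[of f "\<lambda>_. 0" d "8 * K"])
      show "f M = 0 + (\<Sum>m\<in>{1..M}. d m)" for M by (simp add: f_def d_def)
      show "norm (0::complex) \<le> 8 * K * gg M" for M using K(1) gg_pos[of M] by simp
      fix m :: nat assume m: "m \<ge> 1"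
      have "norm (d m) = 1 / real m ^ s * norm (trunc_L v (m - 1))"
        by (simp add: d_def norm_mult norm_divide norm_power na)
      also have "\<dots> \<le> 1 / real m ^ 2 * (1 + harm m) ^ length v"
      proof (intro mult_mono)
        have "real m ^ 2 \<le> real m ^ s" using m True by (intro power_increasing) auto
        thus "1 / real m ^ s \<le> 1 / real m ^ 2" using m by (intro divide_left_mono) auto
        show "norm (trunc_L v (m - 1)) \<le> (1 + harm m) ^ length v"
          by (rule order.trans[OF T_bound[OF N v] harm_pow_mono]) auto
      qed auto
      also have "\<dots> \<le> 4 / (real m + 1) ^ 2 * (1 + harm m) ^ length v"
      proof (intro mult_right_mono)
        have "(real m + 1) ^ 2 \<le> (2 * real m) ^ 2" using m by (intro power_mono) auto
        hence "(real m + 1) ^ 2 \<le> 4 * real m ^ 2" by (simp add: power_mult_distrib)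
        thus "1 / real m ^ 2 \<le> 4 / (real m + 1) ^ 2" using m by (simp add: field_simps)
      qed (auto simp: harm_nonneg add_nonneg_nonneg)
      also have "\<dots> = 4 * ((1 + harm m) ^ length v / (real m + 1) ^ 2)" by simp
      also have "\<dots> \<le> 4 * (2 * K * (gg (m - 1) - gg m))"
        by (intro mult_left_mono gg_diff_bound m K(2)) (use K in auto)
      finally show "norm (d m) \<le> 8 * K * (gg (m - 1) - gg m)" by simp
    qed
  next
    case False
    hence s1: "s = 1" using s by simp
    hence a1: "a \<noteq> 1" using ne by simp
    hence a1': "a - 1 \<noteq> 0" by simp
    define D where "D = 1 / norm (a - 1)"
    have D: "D > 0" using a1' by (simp add: D_def)
    define b where "b = (\<lambda>m. trunc_L v (m - 1) / of_nat m)"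
    define B where "B = (\<lambda>m::nat. a ^ (m + 1) / (a - 1))"
    have nB: "norm (B m) = D" for m by (simp add: B_def D_def norm_divide norm_power na norm_mult)
    define R where "R = (\<lambda>M. B M * b M)"
    define d where "d = (\<lambda>m. - (B (m - 1) * (b m - b (m - 1))))"
    show ?thesis
    proof (rule adm_conv_gen[of f R d "24 * D * K"])
      show "f M = R M + (\<Sum>m\<in>{1..M}. d m)" for M
      proof (induction M)
        case 0 thus ?case by (simp add: f_def R_def b_def)
      next
        case (Suc M)
        have key: "R M + a ^ Suc M / of_nat (Suc M) * trunc_L v M = R (Suc M) + d (Suc M)"
        proof -
          have BB: "B (Suc M) - B M = a ^ Suc M"
          proof -
            have "a ^ (Suc M + 1) - a ^ (M + 1) = a ^ Suc M * (a - 1)" by (simp add: algebra_simps)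
            hence "B (Suc M) - B M = a ^ Suc M * (a - 1) / (a - 1)"
              unfolding B_def by (simp add: diff_divide_distrib[symmetric])
            thus ?thesis using a1' by simp
          qed
          have bS: "b (Suc M) = trunc_L v M / of_nat (Suc M)" by (simp add: b_def)
          have "R (Suc M) + d (Suc M) = (B (Suc M) - B M) * b (Suc M) + R M"
            unfolding R_def d_def by (simp add: algebra_simps)
          also have "\<dots> = R M + a ^ Suc M / of_nat (Suc M) * trunc_L v M"
            unfolding BB bS by simp
          finally show ?thesis by simp
        qed
        have "f (Suc M) = f M + a ^ Suc M / of_nat (Suc M) * trunc_L v M"
          by (simp add: f_def T_Cons_Suc s1)
        also have "\<dots> = R M + (\<Sum>m\<in>{1..M}. d m) + a ^ Suc M / of_nat (Suc M) * trunc_L v M"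
          using Suc.IH by simp
        finally have fS: "f (Suc M) = R M + (\<Sum>m\<in>{1..M}. d m) + a ^ Suc M / of_nat (Suc M) * trunc_L v M" .
        show ?case using fS key by (simp add: sum.cl_ivl_Suc algebra_simps)
      qed
      show "norm (R M) \<le> 24 * D * K * gg M" for M
      proof (cases "M = 0")
        case True thus ?thesis using D K gg_pos[of M] by (simp add: R_def b_def)
      next
        case False
        have "norm (R M) = D * (norm (trunc_L v (M - 1)) / real M)"
          by (simp add: R_def nB norm_mult b_def norm_divide)
        also have "\<dots> \<le> D * ((1 + harm M) ^ length v / real M)"
          using D False by (intro mult_left_mono divide_right_mono order.trans[OF T_bound[OF N v] harm_pow_mono]) auto
        also have "\<dots> \<le> D * (K * sqrt (real M + 1) / real M)"
          using D False K(2)[of M] by (intro mult_left_mono divide_right_mono) auto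
        also have "K * sqrt (real M + 1) / real M \<le> 2 * K * gg M"
        proof -
          have "sqrt (real M + 1) / real M \<le> 2 / sqrt (real M + 1)"
          proof -
            have sq: "sqrt (real M + 1) * sqrt (real M + 1) = real M + 1" by simp
            have "real M + 1 \<le> 2 * real M" using False by simp
            thus ?thesis using False sq by (simp add: field_simps)
          qed
          hence "K * (sqrt (real M + 1) / real M) \<le> K * (2 / sqrt (real M + 1))"
            using K(1) by (intro mult_left_mono) auto
          thus ?thesis by (simp add: gg_def mult.commute)
        qed
        hence "D * (K * sqrt (real M + 1) / real M) \<le> D * (2 * K * gg M)" using D by (intro mult_left_mono) auto
        also have "\<dots> \<le> 24 * D * K * gg M" using D K gg_pos[of M] by simp
        finally show ?thesis by simp
      qed
      fix m :: nat assume m: "m \<ge> 1"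
      have "norm (d m) = D * norm (b m - b (m - 1))" by (simp add: d_def norm_mult nB)
      also have "\<dots> \<le> D * (12 * ((1 + harm m) ^ length v / (real m + 1) ^ 2))"
        using b_diff_bound[OF N v m] D unfolding b_def by (intro mult_left_mono) auto
      also have "\<dots> \<le> D * (12 * (2 * K * (gg (m - 1) - gg m)))"
        using D by (intro mult_left_mono gg_diff_bound m K(2)) (use K in auto)
      finally show "norm (d m) \<le> 24 * D * K * (gg (m - 1) - gg m)" by simp
    qed
  qed
  thus ?thesis unfolding Lf f_def .
qed


section \<open>CMZV closure\<close>

lemma CMZV_zero: "0 \<in> CMZV N W"
  unfolding CMZV_def by (rule CollectI, rule exI[of _ "{}"]) auto

lemma CMZV_L: "cmzv_index N W xs \<Longrightarrow> L_val xs \<in> CMZV N W"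
  unfolding CMZV_def by (rule CollectI, rule exI[of _ "{xs}"], rule exI[of _ "\<lambda>_. 1"]) auto

lemma CMZV_rat: assumes "c \<in> CMZV N W" shows "of_rat r * c \<in> CMZV N W"
proof -
  obtain S q where S: "finite S" "\<forall>xs\<in>S. cmzv_index N W xs" "c = (\<Sum>xs\<in>S. of_rat (q xs) * L_val xs)"
    using assms unfolding CMZV_def by blast
  have "of_rat r * c = (\<Sum>xs\<in>S. of_rat (r * q xs) * L_val xs)"
    unfolding S(3) by (simp add: sum_distrib_left of_rat_mult mult_ac)
  thus ?thesis unfolding CMZV_def using S(1,2)
    by (intro CollectI exI[of _ S] exI[of _ "\<lambda>xs. r * q xs"]) auto
qed

lemma CMZV_add: assumes "c1 \<in> CMZV N W" "c2 \<in> CMZV N W" shows "c1 + c2 \<in> CMZV N W"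
proof -
  obtain S1 q1 where S1: "finite S1" "\<forall>xs\<in>S1. cmzv_index N W xs" "c1 = (\<Sum>xs\<in>S1. of_rat (q1 xs) * L_val xs)"
    using assms(1) unfolding CMZV_def by blast
  obtain S2 q2 where S2: "finite S2" "\<forall>xs\<in>S2. cmzv_index N W xs" "c2 = (\<Sum>xs\<in>S2. of_rat (q2 xs) * L_val xs)"
    using assms(2) unfolding CMZV_def by blast
  define S where "S = S1 \<union> S2"
  define q1' where "q1' xs = (if xs \<in> S1 then q1 xs else 0)" for xs
  define q2' where "q2' xs = (if xs \<in> S2 then q2 xs else 0)" for xs
  have fin: "finite S" using S1 S2 by (simp add: S_def)
  have e1: "c1 = (\<Sum>xs\<in>S. of_rat (q1' xs) * L_val xs)"
    unfolding S1(3) by (rule sum.mono_neutral_cong_left) (use S1(1) S2(1) in \<open>auto simp: S_def q1'_def fin\<close>)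
  have e2: "c2 = (\<Sum>xs\<in>S. of_rat (q2' xs) * L_val xs)"
    unfolding S2(3) by (rule sum.mono_neutral_cong_left) (use S1(1) S2(1) in \<open>auto simp: S_def q2'_def fin\<close>)
  have "c1 + c2 = (\<Sum>xs\<in>S. of_rat (q1' xs + q2' xs) * L_val xs)"
    unfolding e1 e2 by (simp add: sum.distrib[symmetric] of_rat_add distrib_right)
  moreover have "\<forall>xs\<in>S. cmzv_index N W xs" using S1(2) S2(2) by (auto simp: S_def)
  ultimately show ?thesis unfolding CMZV_def using fin
    by (intro CollectI exI[of _ S] exI[of _ "\<lambda>xs. q1' xs + q2' xs"]) auto
qed

section \<open>The log variable and harmonic numbers\<close>

definition X :: "nat \<Rightarrow> complex" where "X M = of_real (ln (real M)) + euler_mascheroni"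
definition hh :: "nat \<Rightarrow> complex" where "hh M = harm M"

lemma eps_real_bound:
  assumes "M \<ge> 1"
  shows "\<bar>harm M - ln (real M) - euler_mascheroni\<bar> \<le> 1 / real M"
proof -
  have g1: "harm M - ln (of_nat (Suc M)) + inverse (of_nat (2*(M+1))) \<le> (euler_mascheroni::real)"
   and g2: "(euler_mascheroni::real) \<le> harm M - ln (of_nat (Suc M)) + inverse (of_nat (2*M))"
    using euler_mascheroni_bounds[OF assms] unfolding atLeastAtMost_iff by blast+
  have lS: "ln (of_nat (Suc M)) = ln (real M + 1)" by simp
  have i1: "inverse (of_nat (2*(M+1)) :: real) \<ge> 0" by simp
  have i2: "inverse (of_nat (2*M) :: real) \<le> 1 / real M" using assms by (simp add: field_simps)
  have i3: "inverse (of_nat (2*M) :: real) \<ge> 0" by simp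
  have l0: "ln (real M + 1) - ln (real M) \<ge> 0" using assms by simp
  have "ln (real M + 1) - ln (real M) = ln ((real M + 1) / real M)" using assms by (simp add: ln_div)
  also have "\<dots> \<le> (real M + 1) / real M - 1" using assms by (intro ln_le_minus_one) auto
  also have "\<dots> = 1 / real M" using assms by (simp add: field_simps)
  finally have l1: "ln (real M + 1) - ln (real M) \<le> 1 / real M" .
  have i1: "inverse (real (2*(M+1))) \<ge> 0" "inverse (real (2*M)) \<le> 1 / real M" using assms by (auto simp: field_simps)
  show ?thesis unfolding abs_le_iff using g1 g2 lS l0 l1 i1 i2 i3 by linarith
qed

lemma negl_eps: "negl (\<lambda>M. hh M - X M)"
proof (rule negl_from_bound[of _ 2])
  show "eventually (\<lambda>M. norm (hh M - X M) \<le> 2 / sqrt (real M + 1)) sequentially"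
    using eventually_ge_at_top[of 1]
  proof eventually_elim
    case (elim M)
    have "hh M - X M = of_real (harm M - ln (real M) - euler_mascheroni)"
      by (simp add: hh_def X_def of_real_harm)
    hence "norm (hh M - X M) = \<bar>harm M - ln (real M) - euler_mascheroni\<bar>" by (simp only: norm_of_real)
    also have "\<dots> \<le> 1 / real M" by (rule eps_real_bound[OF elim])
    also have "\<dots> \<le> 2 / sqrt (real M + 1)"
    proof -
      have "(real M + 1) * 1 \<le> (real M + 1) * (real M + 1)" by (intro mult_left_mono) auto
      hence "sqrt (real M + 1) \<le> real M + 1" by (intro real_le_lsqrt) (auto simp: power2_eq_square)
      also have "\<dots> \<le> 2 * real M" using elim by simp
      finally have sq: "sqrt (real M + 1) \<le> 2 * real M" .
      show ?thesis by (rule frac_cross) (use elim sq in auto)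
    qed
    finally show ?case .
  qed
qed

lemma X_bound: "norm (X M) \<le> 1 * (1 + \<bar>ln (real M)\<bar>) ^ 1"
proof -
  have "norm (X M) \<le> norm (of_real (ln (real M)) :: complex) + norm (euler_mascheroni :: complex)"
    unfolding X_def by (rule norm_triangle_ineq)
  also have "norm (euler_mascheroni :: complex) = euler_mascheroni"
  proof -
    have "norm (euler_mascheroni :: complex) = norm (of_real (euler_mascheroni::real) :: complex)"
      by (simp only: of_real_euler_mascheroni)
    also have "\<dots> = euler_mascheroni" using euler_mascheroni_pos by (simp only: norm_of_real abs_of_pos)
    finally show ?thesis .
  qed
  also have "(euler_mascheroni::real) \<le> 1" using euler_mascheroni_less_13_over_22 by simp
  finally show ?thesis by simp
qed

lemma poly_X_bound:
  "\<exists>C. \<forall>M. norm (poly p (X M)) \<le> C * (1 + \<bar>ln (real M)\<bar>) ^ degree p"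
proof (intro exI allI)
  fix M
  define L where "L = 1 + \<bar>ln (real M)\<bar>"
  have L1: "L \<ge> 1" by (simp add: L_def)
  have "norm (poly p (X M)) \<le> (\<Sum>i\<le>degree p. norm (coeff p i * X M ^ i))"
    unfolding poly_altdef by (rule norm_sum)
  also have "\<dots> \<le> (\<Sum>i\<le>degree p. norm (coeff p i) * L ^ degree p)"
  proof (rule sum_mono)
    fix i assume i: "i \<in> {..degree p}"
    have "norm (X M ^ i) \<le> L ^ i" unfolding norm_power using X_bound[of M]
      by (intro power_mono) (auto simp: L_def)
    also have "\<dots> \<le> L ^ degree p" using L1 i by (intro power_increasing) auto
    finally show "norm (coeff p i * X M ^ i) \<le> norm (coeff p i) * L ^ degree p"
      by (simp add: norm_mult mult_left_mono)
  qed
  also have "\<dots> = (\<Sum>i\<le>degree p. norm (coeff p i)) * L ^ degree p" by (simp add: sum_distrib_right)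
  finally show "norm (poly p (X M)) \<le> (\<Sum>i\<le>degree p. norm (coeff p i)) * (1 + \<bar>ln (real M)\<bar>) ^ degree p"
    by (simp add: L_def)
qed

section \<open>Regularizable functions\<close>

definition REGF :: "nat \<Rightarrow> nat \<Rightarrow> (nat \<Rightarrow> complex) \<Rightarrow> bool" where
  "REGF N W f \<longleftrightarrow> (\<exists>p c. coeff p 0 = 0 \<and> c \<in> CMZV N W \<and> negl (\<lambda>M. f M - poly p (X M) - c))"

lemma REGF_cong: "REGF N W f \<Longrightarrow> (\<And>M. f M = g M) \<Longrightarrow> REGF N W g"
proof -
  assume "REGF N W f" "\<And>M. f M = g M"
  hence "f = g" by auto
  thus ?thesis using \<open>REGF N W f\<close> by simp
qed

lemma REGF_add: assumes "REGF N W f" "REGF N W g" shows "REGF N W (\<lambda>M. f M + g M)"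
proof -
  obtain p c where p: "coeff p 0 = 0" "c \<in> CMZV N W" "negl (\<lambda>M. f M - poly p (X M) - c)"
    using assms(1) unfolding REGF_def by blast
  obtain p' c' where p': "coeff p' 0 = 0" "c' \<in> CMZV N W" "negl (\<lambda>M. g M - poly p' (X M) - c')"
    using assms(2) unfolding REGF_def by blast
  have "negl (\<lambda>M. (f M + g M) - poly (p + p') (X M) - (c + c'))"
    using negl_add[OF p(3) p'(3)] by (rule negl_cong) (simp add: algebra_simps)
  thus ?thesis unfolding REGF_def using p p' CMZV_add[OF p(2) p'(2)] by (intro exI[of _ "p + p'"] exI[of _ "c + c'"]) auto
qed

lemma REGF_rat: assumes "REGF N W f" shows "REGF N W (\<lambda>M. of_rat r * f M)"
proof -
  obtain p c where p: "coeff p 0 = 0" "c \<in> CMZV N W" "negl (\<lambda>M. f M - poly p (X M) - c)"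
    using assms(1) unfolding REGF_def by blast
  have "negl (\<lambda>M. of_rat r * f M - poly (smult (of_rat r) p) (X M) - of_rat r * c)"
    using negl_cmult[OF p(3), of "of_rat r"] by (rule negl_cong) (simp add: algebra_simps)
  thus ?thesis unfolding REGF_def using p CMZV_rat[OF p(2)]
    by (intro exI[of _ "smult (of_rat r) p"] exI[of _ "of_rat r * c"]) auto
qed

lemma REGF_hh: assumes "REGF N W' f" shows "REGF N W (\<lambda>M. hh M * f M)"
proof -
  obtain p c where p: "coeff p 0 = 0" "c \<in> CMZV N W'" "negl (\<lambda>M. f M - poly p (X M) - c)"
    using assms(1) unfolding REGF_def by blast
  define e where "e M = f M - poly p (X M) - c" for M
  define \<epsilon> where "\<epsilon> M = hh M - X M" for M
  define p' where "p' = pCons 0 (p + [:c:])"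
  have e: "negl e" using p(3) by (simp add: e_def[abs_def])
  have eps: "negl \<epsilon>" using negl_eps by (simp add: \<epsilon>_def[abs_def])
  obtain C where C: "\<And>M. norm (poly p (X M)) \<le> C * (1 + \<bar>ln (real M)\<bar>) ^ degree p"
    using poly_X_bound[of p] by blast
  have b1: "norm (poly p (X M) + c) \<le> (C + norm c) * (1 + \<bar>ln (real M)\<bar>) ^ degree p" for M
  proof -
    have "1 \<le> (1 + \<bar>ln (real M)\<bar>) ^ degree p" by (intro one_le_power) auto
    hence "norm c \<le> norm c * (1 + \<bar>ln (real M)\<bar>) ^ degree p"
      using mult_left_mono[of 1 _ "norm c"] by simp
    thus ?thesis using C[of M] norm_triangle_ineq[of "poly p (X M)" c] by (simp add: distrib_right)
  qed
  have n1: "negl (\<lambda>M. (poly p (X M) + c) * \<epsilon> M)" by (rule negl_mult_bounded[OF eps b1])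
  have n2: "negl (\<lambda>M. X M * e M)" by (rule negl_mult_bounded[OF e X_bound])
  have n3: "negl (\<lambda>M. \<epsilon> M * e M)" by (rule negl_mult_negl[OF eps e])
  have "negl (\<lambda>M. hh M * f M - poly p' (X M) - 0)"
    using negl_add[OF negl_add[OF n1 n2] n3]
  proof (rule negl_cong)
    fix M
    have hh: "hh M = X M + \<epsilon> M" by (simp add: \<epsilon>_def)
    have ff: "f M = poly p (X M) + c + e M" by (simp add: e_def)
    show "(poly p (X M) + c) * \<epsilon> M + X M * e M + \<epsilon> M * e M = hh M * f M - poly p' (X M) - 0"
      unfolding hh ff p'_def by (simp add: algebra_simps)
  qed
  moreover have "coeff p' 0 = 0" by (simp add: p'_def)
  ultimately show ?thesis unfolding REGF_def using CMZV_zero by blast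
qed

lemma REGF_sum_list:
  assumes "\<forall>r\<in>set rs. REGF N W (g r)" 
  shows "REGF N W (\<lambda>M. sum_list (map (\<lambda>r. g r M) rs))"
  using assms
proof (induction rs)
  case Nil
  have "negl (\<lambda>M. 0 - poly 0 (X M) - 0)" by (rule negl_from_bound[of _ 0]) simp
  thus ?case unfolding REGF_def using CMZV_zero by (intro exI[of _ 0] exI[of _ 0]) simp
next
  case (Cons r rs)
  thus ?case using REGF_add[of N W "g r" "\<lambda>M. sum_list (map (\<lambda>r. g r M) rs)"] by simp
qed


lemma hh_Suc: "hh (Suc M) = hh M + 1 / of_nat (Suc M)"
  by (simp add: hh_def harm_Suc inverse_eq_divide)

lemma hh_0 [simp]: "hh 0 = 0" by (simp add: hh_def harm_def)

lemma T_single: "trunc_L [(1, 1)] M = hh M"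
  unfolding hh_def harm_def by (simp add: inverse_eq_divide)

lemma stuffle1:
  "hh M * trunc_L ((s, a) # v) M = trunc_L ((1, 1) # (s, a) # v) M + trunc_L ((Suc s, a) # v) M
     + (\<Sum>m\<in>{1..M}. a ^ m / of_nat m ^ s * (hh (m - 1) * trunc_L v (m - 1)))"
proof (induction M)
  case 0 thus ?case by simp
next
  case (Suc M)
  define A where "A = a ^ Suc M / of_nat (Suc M) ^ s"
  define n where "n = (of_nat (Suc M) :: complex)"
  have n0: "n \<noteq> 0" unfolding n_def by (rule of_nat_neq_0)
  have e1: "trunc_L ((s, a) # v) (Suc M) = trunc_L ((s, a) # v) M + A * trunc_L v M"
    by (simp add: T_Cons_Suc A_def)
  have e2: "trunc_L ((1, 1) # (s, a) # v) (Suc M) = trunc_L ((1, 1) # (s, a) # v) M + 1 / n * trunc_L ((s, a) # v) M"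
    by (simp only: T_Cons_Suc n_def) simp
  have e3: "trunc_L ((Suc s, a) # v) (Suc M) = trunc_L ((Suc s, a) # v) M + A / n * trunc_L v M"
    by (simp only: T_Cons_Suc A_def n_def) (simp add: field_simps)
  have e4: "(\<Sum>m\<in>{1..Suc M}. a ^ m / of_nat m ^ s * (hh (m - 1) * trunc_L v (m - 1)))
      = (\<Sum>m\<in>{1..M}. a ^ m / of_nat m ^ s * (hh (m - 1) * trunc_L v (m - 1))) + A * (hh M * trunc_L v M)"
    by (simp add: sum.cl_ivl_Suc A_def)
  have e5: "hh (Suc M) = hh M + 1 / n" by (simp add: hh_Suc n_def)
  show ?case
    unfolding e1 e2 e3 e4 e5 using Suc.IH n0 by (simp add: algebra_simps add_divide_distrib)
qed

definition lead :: "(nat \<times> complex) list \<Rightarrow> nat" where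
  "lead w = length (takeWhile (\<lambda>x. x = (1, 1)) w)"

lemma lead_Nil [simp]: "lead [] = 0" by (simp add: lead_def)
lemma lead_Cons11 [simp]: "lead ((1, 1) # v) = Suc (lead v)" by (simp add: lead_def)
lemma lead_Cons11' [simp]: "lead ((Suc 0, 1) # v) = Suc (lead v)" by (simp add: lead_def)
lemma lead_Cons_other [simp]: "x \<noteq> (1, 1) \<Longrightarrow> lead (x # v) = 0" by (simp add: lead_def)

fun rest :: "(nat \<times> complex) list \<Rightarrow> (nat \<times> complex) list list" where
  "rest [] = []"
| "rest ((s, a) # v) = (if (s, a) = (1, 1) then ((2, 1) # v) # map ((#) (1, 1)) (rest v)
     else ((Suc s, a) # v) # map ((#) (s, a)) (replicate (Suc (lead v)) ((1, 1) # v) @ rest v))"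

lemma sum_list_Cons_T:
  "sum_list (map (\<lambda>r. trunc_L ((s, a) # r) M) rs)
     = (\<Sum>m\<in>{1..M}. a ^ m / of_nat m ^ s * sum_list (map (\<lambda>r. trunc_L r (m - 1)) rs))"
  by (induction rs) (simp_all add: sum.distrib distrib_left)

lemma stuffle_rest:
  "hh M * trunc_L u M = of_nat (Suc (lead u)) * trunc_L ((1, 1) # u) M + sum_list (map (\<lambda>r. trunc_L r M) (rest u))"
proof (induction u arbitrary: M)
  case Nil thus ?case using T_single[of M] by simp
next
  case (Cons x v)
  obtain s a where x: "x = (s, a)" by (cases x)
  have inner: "(\<Sum>m\<in>{1..M}. a ^ m / of_nat m ^ s * (hh (m - 1) * trunc_L v (m - 1)))
     = of_nat (Suc (lead v)) * trunc_L ((s, a) # (1, 1) # v) M + sum_list (map (\<lambda>r. trunc_L ((s, a) # r) M) (rest v))"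
    unfolding Cons.IH sum_list_Cons_T by (simp add: sum.distrib distrib_left sum_distrib_left mult_ac)
  show ?case
  proof (cases "(s, a) = (1, 1)")
    case True
    hence sa: "s = 1" "a = 1" by auto
    show ?thesis unfolding x stuffle1 inner using sa
      by (simp add: o_def algebra_simps numeral_2_eq_2 del: trunc_L.simps)
  next
    case False
    show ?thesis unfolding x stuffle1 inner rest.simps if_not_P[OF False] lead_Cons_other[OF False]
      by (simp add: o_def algebra_simps sum_list_replicate map_replicate del: trunc_L.simps)
  qed
qed

definition weight :: "(nat \<times> complex) list \<Rightarrow> nat" where
  "weight w = sum_list (map fst w)"

lemma weight_Cons [simp]: "weight ((s, a) # v) = s + weight v" by (simp add: weight_def)
lemma weight_Nil [simp]: "weight [] = 0" by (simp add: weight_def)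

lemma rest_props:
  "r \<in> set (rest u) \<Longrightarrow> valid N u \<Longrightarrow> N \<ge> 1 \<Longrightarrow>
     valid N r \<and> weight r = Suc (weight u) \<and> lead r \<le> lead u \<and> r \<noteq> []"
proof (induction u arbitrary: r)
  case Nil thus ?case by simp
next
  case (Cons x v)
  obtain s a where x: "x = (s, a)" by (cases x)
  show ?case
  proof (cases "(s, a) = (1, 1)")
    case True
    hence sa: "s = 1" "a = 1" by auto
    from Cons.prems have "r = (2, 1) # v \<or> (\<exists>r'\<in>set (rest v). r = (1, 1) # r')"
      unfolding x sa by auto
    thus ?thesis
    proof
      assume "r = (2, 1) # v" thus ?thesis using Cons.prems unfolding x sa by simp
    next
      assume "\<exists>r'\<in>set (rest v). r = (1, 1) # r'"
      then obtain r' where r': "r' \<in> set (rest v)" "r = (1, 1) # r'" by blast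
      have "valid N v" using Cons.prems x by simp
      with Cons.IH[OF r'(1)] Cons.prems(3) show ?thesis unfolding r'(2) x sa by simp
    qed
  next
    case False
    have s1: "s \<ge> 1" "a ^ N = 1" "valid N v" using Cons.prems x by auto
    from Cons.prems have "r = (Suc s, a) # v \<or> r = (s, a) # (1, 1) # v \<or> (\<exists>r'\<in>set (rest v). r = (s, a) # r')"
      unfolding x using False by auto
    thus ?thesis
    proof (elim disjE)
      assume "r = (Suc s, a) # v" thus ?thesis using s1 False x by simp
    next
      assume "r = (s, a) # (1, 1) # v" thus ?thesis using s1 False x by simp
    next
      assume "\<exists>r'\<in>set (rest v). r = (s, a) # r'"
      then obtain r' where r': "r' \<in> set (rest v)" "r = (s, a) # r'" by blast
      with Cons.IH[OF r'(1) s1(3) Cons.prems(3)] show ?thesis using s1 False x by simp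
    qed
  qed
qed

lemma main_reg:
  assumes N: "N \<ge> 1"
  shows "valid N w \<Longrightarrow> w \<noteq> [] \<Longrightarrow> REGF N (weight w) (trunc_L w)"
proof -
  have "\<forall>w. weight w = W \<longrightarrow> valid N w \<longrightarrow> w \<noteq> [] \<longrightarrow> REGF N W (trunc_L w)" for W
  proof (induction W rule: less_induct)
    case (less W)
    have "\<forall>w. lead w = k \<longrightarrow> weight w = W \<longrightarrow> valid N w \<longrightarrow> w \<noteq> [] \<longrightarrow> REGF N W (trunc_L w)" for k
    proof (induction k rule: less_induct)
      case (less k)
      show ?case
      proof (intro allI impI)
        fix w assume w: "lead w = k" "weight w = W" "valid N w" "w \<noteq> []"
        then obtain x u where xu: "w = x # u" by (cases w) auto
        obtain s a where x: "x = (s, a)" by (cases x)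
        show "REGF N W (trunc_L w)"
        proof (cases "(s, a) = (1, 1)")
          case False
          have "negl (\<lambda>M. trunc_L w M - L_val w)"
            using adm_conv[OF N, of s a u] w(3) False unfolding xu x by simp
          moreover have "cmzv_index N W w"
            unfolding cmzv_index_def using w(2,3,4) False unfolding xu x
            by (auto simp: valid_def weight_def)
          ultimately show ?thesis unfolding REGF_def
            by (intro exI[of _ 0] exI[of _ "L_val w"]) (auto intro: CMZV_L)
        next
          case True
          hence w11: "w = (1, 1) # u" using xu x by simp
          show ?thesis
          proof (cases "u = []")
            case True
            have "negl (\<lambda>M. trunc_L w M - poly [:0, 1:] (X M) - 0)"
              using negl_eps by (rule negl_cong) (use T_single in \<open>simp add: w11 True\<close>)
            thus ?thesis unfolding REGF_def using CMZV_zero by (intro exI[of _ "[:0, 1:]"] exI[of _ 0]) auto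
          next
            case False
            have vu: "valid N u" using w(3) w11 by simp
            have wu: "weight u < W" "W = Suc (weight u)" using w(2) w11 by auto
            have ku: "k = Suc (lead u)" using w(1) w11 by simp
            have Ru: "REGF N (weight u) (trunc_L u)" using less.prems wu(1) vu False
              using \<open>\<And>y. y < W \<Longrightarrow> \<forall>w. weight w = y \<longrightarrow> valid N w \<longrightarrow> w \<noteq> [] \<longrightarrow> REGF N y (trunc_L w)\<close>
              by blast
            have R1: "REGF N W (\<lambda>M. hh M * trunc_L u M)" by (rule REGF_hh[OF Ru])
            have Rr: "\<forall>r\<in>set (rest u). REGF N W (trunc_L r)"
            proof
              fix r assume r: "r \<in> set (rest u)"
              have pr: "valid N r" "weight r = W" "lead r < k" "r \<noteq> []"
                using rest_props[OF r vu N] wu ku by auto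
              thus "REGF N W (trunc_L r)" using less.IH[OF pr(3)] pr by blast
            qed
            have R2: "REGF N W (\<lambda>M. sum_list (map (\<lambda>r. trunc_L r M) (rest u)))"
              by (rule REGF_sum_list[OF Rr])
            have R3: "REGF N W (\<lambda>M. of_rat (-1) * sum_list (map (\<lambda>r. trunc_L r M) (rest u)))"
              by (rule REGF_rat[OF R2])
            have R4: "REGF N W (\<lambda>M. of_rat (1 / of_nat k) * (hh M * trunc_L u M + of_rat (-1) * sum_list (map (\<lambda>r. trunc_L r M) (rest u))))"
              by (rule REGF_rat[OF REGF_add[OF R1 R3]])
            show ?thesis
            proof (rule REGF_cong[OF R4])
              fix M
              have k0: "(of_nat k :: complex) \<noteq> 0" unfolding ku by (rule of_nat_neq_0)
              have "hh M * trunc_L u M = of_nat k * trunc_L w M + sum_list (map (\<lambda>r. trunc_L r M) (rest u))"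
                unfolding stuffle_rest ku w11 ..
              thus "of_rat (1 / of_nat k) * (hh M * trunc_L u M + of_rat (-1) * sum_list (map (\<lambda>r. trunc_L r M) (rest u))) = trunc_L w M"
                using k0 by (simp add: of_rat_divide field_simps)
            qed
          qed
        qed
      qed
    qed
    thus ?case by blast
  qed
  thus "valid N w \<Longrightarrow> w \<noteq> [] \<Longrightarrow> REGF N (weight w) (trunc_L w)" by blast
qed


lemma color_weight: "weight (color_diffs \<mu> p ps) = sum_list (map fst ps)"
  by (induction ps arbitrary: p) (auto simp: weight_def)

lemma color_valid:
  assumes "\<forall>(s, i)\<in>set ps. s \<ge> 1" "\<mu> ^ N = 1"
  shows "valid N (color_diffs \<mu> p ps)"
  using assms(1)
proof (induction ps arbitrary: p)
  case Nil thus ?case by simp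
next
  case (Cons x ps)
  obtain s i where x: "x = (s, i)" by (cases x)
  have "(\<mu> powi (i - p)) ^ N = 1"
  proof -
    have "(\<mu> powi (i - p)) ^ N = \<mu> powi ((i - p) * int N)" by (rule power_int_power')
    also have "\<dots> = (\<mu> ^ N) powi (i - p)" by (simp add: power_int_power mult.commute)
    also have "\<dots> = 1" using assms(2) by simp
    finally show ?thesis .
  qed
  thus ?case using Cons x by simp
qed

theorem proposition2p3:
  fixes N :: nat and ps :: "(nat \<times> int) list"
  assumes "N \<ge> 1"
    and "ps \<noteq> []"
    and "\<forall>(s, i)\<in>set ps. s \<ge> 1"
  defines "\<mu> \<equiv> exp (2 * of_real pi * \<i> / of_nat N)"
  defines "H \<equiv> (\<lambda>M. trunc_L (color_diffs \<mu> 0 ps) M)"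
  shows "\<exists>(r::nat) (t::nat \<Rightarrow> nat) (a::nat \<Rightarrow> complex) c.
           (\<forall>j<r. t j \<ge> 1) \<and> c \<in> CMZV N (sum_list (map fst ps)) \<and>
           (\<lambda>M. H M - ((\<Sum>j<r. a j * (of_real (ln (real M)) + euler_mascheroni) ^ t j) + c))
              \<longlonglongrightarrow> 0"
proof -
  have mu: "\<mu> ^ N = 1"
  proof -
    have "\<mu> ^ N = exp (of_nat N * (2 * of_real pi * \<i> / of_nat N))"
      unfolding \<mu>_def by (rule exp_of_nat_mult[symmetric])
    also have "of_nat N * (2 * of_real pi * \<i> / of_nat N) = 2 * of_real pi * \<i>"
      using assms(1) by simp
    finally show ?thesis by (simp add: exp_two_pi_i)
  qed
  define w where "w = color_diffs \<mu> 0 ps"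
  have vw: "valid N w" unfolding w_def by (rule color_valid[OF assms(3) mu])
  have nw: "w \<noteq> []" using assms(2) by (cases ps) (auto simp: w_def)
  have ww: "weight w = sum_list (map fst ps)" unfolding w_def by (rule color_weight)
  obtain p c where p: "coeff p 0 = 0" "c \<in> CMZV N (sum_list (map fst ps))"
      "negl (\<lambda>M. trunc_L w M - poly p (X M) - c)"
    using main_reg[OF assms(1) vw nw] unfolding REGF_def ww by blast
  have polyeq: "poly p (X M) = (\<Sum>j<degree p. coeff p (Suc j) * (of_real (ln (real M)) + euler_mascheroni) ^ Suc j)" for M
  proof -
    have "poly p (X M) = (\<Sum>i<Suc (degree p). coeff p i * X M ^ i)"
      unfolding poly_altdef lessThan_Suc_atMost ..
    also have "\<dots> = coeff p 0 * X M ^ 0 + (\<Sum>j<degree p. coeff p (Suc j) * X M ^ Suc j)"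
      by (rule sum.lessThan_Suc_shift)
    finally show ?thesis using p(1) by (simp add: X_def)
  qed
  show ?thesis
  proof (intro exI[of _ "degree p"] exI[of _ Suc] exI[of _ "\<lambda>j. coeff p (Suc j)"] exI[of _ c] conjI allI impI)
    show "c \<in> CMZV N (sum_list (map fst ps))" by (rule p(2))
    show "Suc j \<ge> 1" for j by simp
    have "(\<lambda>M. trunc_L w M - poly p (X M) - c) \<longlonglongrightarrow> 0" by (rule negl_tendsto[OF p(3)])
    thus "(\<lambda>M. H M - ((\<Sum>j<degree p. coeff p (Suc j) * (of_real (ln (real M)) + euler_mascheroni) ^ Suc j) + c)) \<longlonglongrightarrow> 0"
      unfolding H_def w_def[symmetric] polyeq by (simp add: algebra_simps)
  qed
qed

end
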